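(* Let $S$ be an intra-regular $\Gamma$-AG$^{**}$-groupoid. Then every two-sided $\Gamma$-ideal of $S$ is $\Gamma$-prime if and only if $S$ is $\Gamma$-totally ordered under inclusion, i.e. for any two-sided $\Gamma$-ideals $P,Q$ of $S$, either $P\subseteq Q$ or $Q\subseteq P$.
   Context: Let $S$ and $\Gamma$ be nonempty sets with a map $S\times\Gamma\times S\to S$, $(x,\gamma,y)\mapsto x\gamma y$. $S$ is a $\Gamma$-AG-groupoid if $(x\gamma y)\delta z=(z\gamma y)\delta x$ for all $x,y,z\in S$, $\gamma,\delta\in\Gamma$; it is a $\Gamma$-AG$^{**}$-groupoid if moreover $a\alpha(b\beta c)=b\alpha(a\beta c)$ for all $a,b,c\in S$, $\alpha,\beta\in\Gamma$. For subsets $A,B\subseteq S$, $A\Gamma B=\{a\gamma b: a\in A,\gamma\in\Gamma,b\in B\}$. $S$ is intra-regular if for every $a\in S$ there exist $x,y\in S$ and $\beta,\gamma,\delta\in\Gamma$ with $a=(x\beta(a\delta a))\gamma y$. A nonempty subset $A$ is a two-sided $\Gamma$-ideal if $S\Gamma A\subseteq A$ and $A\Gamma S\subseteq A$. A two-sided $\Gamma$-ideal $P$ is $\Gamma$-prime if for all two-sided $\Gamma$-ideals $A,B$ of $S$, $A\Gamma B\subseteq P$ implies $A\subseteq P$ or $B\subseteq P$. *)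

theory Defs
  imports Main
begin

(* S is modelled by the type 'a, Gamma by the type 'g (types are nonempty);
   the ternary operation x gamma y is  op x gamma y. *)

definition gamma_AG_groupoid :: "('a \<Rightarrow> 'g \<Rightarrow> 'a \<Rightarrow> 'a) \<Rightarrow> bool" where
  "gamma_AG_groupoid op \<longleftrightarrow>
     (\<forall>x y z \<gamma> \<delta>. op (op x \<gamma> y) \<delta> z = op (op z \<gamma> y) \<delta> x)"

definition gamma_AG_ss_groupoid :: "('a \<Rightarrow> 'g \<Rightarrow> 'a \<Rightarrow> 'a) \<Rightarrow> bool" where
  "gamma_AG_ss_groupoid op \<longleftrightarrow> gamma_AG_groupoid op \<and>
     (\<forall>a b c \<alpha> \<beta>. op a \<alpha> (op b \<beta> c) = op b \<alpha> (op a \<beta> c))"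

definition gprod :: "('a \<Rightarrow> 'g \<Rightarrow> 'a \<Rightarrow> 'a) \<Rightarrow> 'a set \<Rightarrow> 'a set \<Rightarrow> 'a set" where
  "gprod op A B = {op a \<gamma> b | a \<gamma> b. a \<in> A \<and> b \<in> B}"

definition intra_regular :: "('a \<Rightarrow> 'g \<Rightarrow> 'a \<Rightarrow> 'a) \<Rightarrow> bool" where
  "intra_regular op \<longleftrightarrow>
     (\<forall>a. \<exists>x y \<beta> \<gamma> \<delta>. a = op (op x \<beta> (op a \<delta> a)) \<gamma> y)"

definition two_sided_ideal :: "('a \<Rightarrow> 'g \<Rightarrow> 'a \<Rightarrow> 'a) \<Rightarrow> 'a set \<Rightarrow> bool" where
  "two_sided_ideal op A \<longleftrightarrow> A \<noteq> {} \<and>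
     gprod op UNIV A \<subseteq> A \<and> gprod op A UNIV \<subseteq> A"

definition gamma_prime :: "('a \<Rightarrow> 'g \<Rightarrow> 'a \<Rightarrow> 'a) \<Rightarrow> 'a set \<Rightarrow> bool" where
  "gamma_prime op P \<longleftrightarrow> two_sided_ideal op P \<and>
     (\<forall>A B. two_sided_ideal op A \<longrightarrow> two_sided_ideal op B \<longrightarrow>
        gprod op A B \<subseteq> P \<longrightarrow> A \<subseteq> P \<or> B \<subseteq> P)"

definition gamma_totally_ordered :: "('a \<Rightarrow> 'g \<Rightarrow> 'a \<Rightarrow> 'a) \<Rightarrow> bool" where
  "gamma_totally_ordered op \<longleftrightarrow>
     (\<forall>P Q. two_sided_ideal op P \<longrightarrow> two_sided_ideal op Q \<longrightarrow> P \<subseteq> Q \<or> Q \<subseteq> P)"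

end

theory Submission
  imports Defs
begin

lemma prod_sub:
  assumes "two_sided_ideal op A" "two_sided_ideal op B"
  shows "gprod op A B \<subseteq> A \<inter> B"
  using assms unfolding two_sided_ideal_def gprod_def by blast

lemma sq:
  assumes "gamma_AG_ss_groupoid op" "intra_regular op" "two_sided_ideal op A"
  shows "A \<subseteq> gprod op A A"
proof
  fix a assume aA: "a \<in> A"
  obtain x y \<beta> \<gamma> \<delta> where a: "a = op (op x \<beta> (op a \<delta> a)) \<gamma> y"
    using assms(2) unfolding intra_regular_def by blast
  have "op x \<beta> (op a \<delta> a) = op a \<beta> (op x \<delta> a)"
    using assms(1) unfolding gamma_AG_ss_groupoid_def by blast
  moreover have "op (op a \<beta> (op x \<delta> a)) \<gamma> y = op (op y \<beta> (op x \<delta> a)) \<gamma> a"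
    using assms(1) unfolding gamma_AG_ss_groupoid_def gamma_AG_groupoid_def by blast
  ultimately have e: "a = op (op y \<beta> (op x \<delta> a)) \<gamma> a" using a by simp
  have "op x \<delta> a \<in> A" using assms(3) aA unfolding two_sided_ideal_def gprod_def by blast
  hence "op y \<beta> (op x \<delta> a) \<in> A" using assms(3) unfolding two_sided_ideal_def gprod_def by blast
  thus "a \<in> gprod op A A" using e aA unfolding gprod_def by blast
qed

lemma inter_ideal:
  assumes "two_sided_ideal op A" "two_sided_ideal op B"
  shows "two_sided_ideal op (A \<inter> B)"
proof -
  obtain a b where "a \<in> A" "b \<in> B" using assms unfolding two_sided_ideal_def by blast
  hence "op a undefined b \<in> A \<inter> B" using prod_sub[OF assms] unfolding gprod_def by blast
  thus ?thesis using assms unfolding two_sided_ideal_def gprod_def by blast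
qed

theorem mainTheorem18:
  fixes op :: "'a \<Rightarrow> 'g \<Rightarrow> 'a \<Rightarrow> 'a"
  assumes "gamma_AG_ss_groupoid op"
    and "intra_regular op"
  shows "(\<forall>P. two_sided_ideal op P \<longrightarrow> gamma_prime op P) \<longleftrightarrow> gamma_totally_ordered op"
proof
  assume H: "\<forall>P. two_sided_ideal op P \<longrightarrow> gamma_prime op P"
  show "gamma_totally_ordered op" unfolding gamma_totally_ordered_def
  proof (intro allI impI)
    fix P Q assume p: "two_sided_ideal op P" and q: "two_sided_ideal op Q"
    have "gamma_prime op (P \<inter> Q)" using H inter_ideal[OF p q] by blast
    hence "P \<subseteq> P \<inter> Q \<or> Q \<subseteq> P \<inter> Q"
      using p q prod_sub[OF p q] unfolding gamma_prime_def by blast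
    thus "P \<subseteq> Q \<or> Q \<subseteq> P" by blast
  qed
next
  assume T: "gamma_totally_ordered op"
  show "\<forall>P. two_sided_ideal op P \<longrightarrow> gamma_prime op P"
  proof (intro allI impI)
    fix P assume p: "two_sided_ideal op P"
    show "gamma_prime op P" unfolding gamma_prime_def
    proof (intro conjI p allI impI)
      fix A B assume a: "two_sided_ideal op A" and b: "two_sided_ideal op B"
        and s: "gprod op A B \<subseteq> P"
      have "A \<subseteq> B \<or> B \<subseteq> A" using T a b unfolding gamma_totally_ordered_def by blast
      thus "A \<subseteq> P \<or> B \<subseteq> P"
      proof
        assume "A \<subseteq> B"
        hence "gprod op A A \<subseteq> gprod op A B" unfolding gprod_def by blast
        thus ?thesis using sq[OF assms a] s by blast
      next
        assume "B \<subseteq> A"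
        hence "gprod op B B \<subseteq> gprod op A B" unfolding gprod_def by blast
        thus ?thesis using sq[OF assms b] s by blast
      qed
    qed
  qed
qed

end
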